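(* Fix $T>0$, $r,\nu,\mu\in\mathbb R$, $\eta>0$, $\sigma>0$, $\rho\in(-1,1)$, $s_0>0$, $\lambda>0$, and let $\delta=\nu-\eta\rho\frac{\mu-r}{\sigma}$. For $\gamma\in(0,+\infty)$ define $\bar\theta(\gamma)=\lambda\gamma(1-\rho^2)$, $\bar w(\gamma)=W\left(s_0\eta^2Te^{(\delta-\frac{\eta^2}{2})T}\bar\theta(\gamma)\right)$ and $$\bar d(\gamma)=\frac{\lambda e^{-rT}}{\bar\theta(\gamma)\eta^2T}\left(\bar w(\gamma)+\frac{\bar w(\gamma)^2}{2}\right),$$ where $W$ is the Lambert function. Then $\bar d$ is $C^1$ and strictly decreasing on $(0,+\infty)$, $$\lim_{\gamma\to0^+}\bar d(\gamma)=\lambda e^{-rT}s_0e^{(\delta-\frac{\eta^2}{2})T},\qquad\lim_{\gamma\to+\infty}\bar d(\gamma)=0,$$ and $\bar d$ is bounded.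
   Context: The Lambert function $W$ is the inverse of the bijection $x\in(-1,+\infty)\mapsto xe^x\in(-1/e,+\infty)$. The quantity $\bar d(\gamma)$ is the deterministic lower approximation of the asking reservation price of $\lambda$ units of a non-traded stock for an agent with exponential utility of risk aversion $\gamma$. *)

theory Defs
  imports "HOL-Analysis.Analysis"
begin

text \<open>Lambert function: inverse of x \<in> (-1,+\<infinity>) \<mapsto> x e^x \<in> (-1/e,+\<infinity>).
  Only meaningful for y > -1/e.\<close>
definition lambertW :: "real \<Rightarrow> real" where
  "lambertW y = (THE x. x > -1 \<and> x * exp x = y)"

end

theory Submission imports Defs "HOL-Real_Asymp.Real_Asymp" begin

lemma xexp_mono: "0 < x \<Longrightarrow> x < x' \<Longrightarrow> x * exp x < x' * exp (x'::real)"
  by (intro mult_strict_mono) auto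

lemma lambertW_pos:
  assumes "y > 0" shows "lambertW y > 0 \<and> lambertW y * exp (lambertW y) = y"
proof -
  have "\<exists>x\<ge>0. x \<le> y \<and> x * exp x = y"
  proof (rule IVT)
    show "0 * exp 0 \<le> y" using assms by simp
    show "y \<le> y * exp y" using assms by simp
  qed (use assms in \<open>auto intro!: continuous_intros\<close>)
  then obtain x where x: "x \<ge> 0" "x * exp x = y" by blast
  with assms have xp: "x > 0" by (cases "x = 0") auto
  have pos: "z > 0" if "z * exp z = y" for z
    using that assms by (smt (verit) exp_gt_zero mult_nonpos_nonneg)
  have "lambertW y = x" unfolding lambertW_def
  proof (rule the_equality)
    show "x > -1 \<and> x * exp x = y" using xp x by simp
    fix z assume "z > -1 \<and> z * exp z = y"
    then have z: "z > 0" "z * exp z = y" using pos by auto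
    show "z = x"
    proof (rule ccontr)
      assume "z \<noteq> x"
      then consider "z < x" | "x < z" by linarith
      then show False using xexp_mono[of z x] xexp_mono[of x z] z x xp by cases auto
    qed
  qed
  then show ?thesis using xp x by simp
qed

lemma lambertW_eq: assumes "x > 0" shows "lambertW (x * exp x) = x"
proof -
  have y: "x * exp x > 0" using assms by simp
  note h = lambertW_pos[OF y]
  show ?thesis
  proof (rule ccontr)
    assume "lambertW (x * exp x) \<noteq> x"
    then consider "lambertW (x * exp x) < x" | "x < lambertW (x * exp x)" by linarith
    then show False using xexp_mono[of "lambertW (x * exp x)" x] xexp_mono[of x "lambertW (x * exp x)"] h assms
      by cases auto
  qed
qed

lemma lambertW_isCont: assumes "y > 0" shows "isCont lambertW y"
proof -
  define x where "x = lambertW y"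
  have x: "x > 0" "x * exp x = y" using lambertW_pos[OF assms] x_def by auto
  have "isCont lambertW ((\<lambda>z. z * exp z) x)"
    by (rule isCont_inverse_function[where d = "x/2" and f = "\<lambda>z. z * exp z" and x = x])
       (use x in \<open>auto intro!: lambertW_eq continuous_intros simp del: abs_mult_self_eq\<close>, smt (verit) abs_le_iff)
  then show ?thesis using x by simp
qed

lemma lambertW_deriv: assumes "y > 0"
  shows "(lambertW has_real_derivative inverse (exp (lambertW y) * (1 + lambertW y))) (at y)"
proof (rule DERIV_inverse_function[where f = "\<lambda>z. z * exp z" and a = 0 and b = "y+1"])
  show "DERIV (\<lambda>z. z * exp z) (lambertW y) :> exp (lambertW y) * (1 + lambertW y)"
    by (auto intro!: derivative_eq_intros simp: algebra_simps)
  show "exp (lambertW y) * (1 + lambertW y) \<noteq> 0" using lambertW_pos[OF assms]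
    by (smt (verit) exp_gt_zero mult_pos_pos)
qed (use assms lambertW_pos lambertW_isCont in auto)

lemma lambertW_le: "y > 0 \<Longrightarrow> lambertW y \<le> y"
  using lambertW_pos[of y] by (smt (verit) mult_le_cancel_left1 one_le_exp_iff)

lemma lambertW_ge: "y > 0 \<Longrightarrow> ln y / 2 \<le> lambertW y"
proof -
  assume y: "y > 0"
  define u where "u = lambertW y"
  have u: "u > 0" "u * exp u = y" using lambertW_pos[OF y] u_def by auto
  have "u \<le> exp u" using exp_ge_add_one_self[of u] by linarith
  then have "y \<le> exp u * exp u" using u by (metis exp_gt_zero less_le mult_right_mono)
  then have "ln y \<le> ln (exp u * exp u)" using y by simp
  also have "\<dots> = 2 * u" by (simp add: ln_mult)
  finally show ?thesis using u_def by simp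
qed

lemma phi_deriv:
  assumes "a > 0" "g > (0::real)"
  shows "((\<lambda>g. exp (- lambertW (a*g)) * (1 + lambertW (a*g) / 2)) has_real_derivative
     -(a/2) * exp (-2 * lambertW (a*g))) (at g)"
proof -
  define u where "u = lambertW (a*g)"
  have ag: "a*g > 0" using assms by simp
  have u: "u > 0" using lambertW_pos[OF ag] u_def by simp
  have d1: "((\<lambda>g. lambertW (a*g)) has_real_derivative inverse (exp u * (1 + u)) * a) (at g)"
    using DERIV_chain2[where f = lambertW and g = "\<lambda>g. a*g" and x = g and Db = a and s = UNIV, OF lambertW_deriv[OF ag]] u_def
    by (auto intro!: derivative_eq_intros)
  have d2: "((\<lambda>v. exp (- v) * (1 + v / 2)) has_real_derivative -exp (-u) * (1 + u) / 2) (at u)"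
    by (auto intro!: derivative_eq_intros) (simp add: field_simps)
  have "((\<lambda>g. exp (- lambertW (a*g)) * (1 + lambertW (a*g) / 2)) has_real_derivative
     (-exp (-u) * (1 + u) / 2) * (inverse (exp u * (1 + u)) * a)) (at g)"
    using DERIV_chain2[OF d2[unfolded u_def] d1[unfolded u_def]] unfolding u_def by simp
  moreover have "(-exp (-u) * (1 + u) / 2) * (inverse (exp u * (1 + u)) * a) = -(a/2) * exp (-2 * u)"
  proof -
    have e1: "exp u = inverse (exp (-u))" by (simp add: exp_minus)
    have e2: "exp (-2*u) = exp (-u) * exp (-u)" by (simp add: exp_add[symmetric])
    have ep: "exp (-u) > 0" "1 + u > 0" using u by auto
    show ?thesis unfolding e1 e2 using ep by (simp add: field_simps power2_eq_square)
  qed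
  ultimately show ?thesis unfolding u_def by (rule back_subst[where P = "\<lambda>D. (_ has_real_derivative D) _"])
qed

lemma lambertW_comp_cont: "a > 0 \<Longrightarrow> continuous_on {0<..} (\<lambda>g::real. lambertW (a*g))"
  by (auto simp: continuous_on_eq_continuous_at intro!: continuous_at_compose[unfolded o_def, OF _ lambertW_isCont] continuous_intros)

theorem proposition3:
  fixes T r \<nu> \<mu> \<eta> \<sigma> \<rho> s0 lam \<delta> :: real
    and \<theta> w d :: "real \<Rightarrow> real"
  assumes "T > 0" and "\<eta> > 0" and "\<sigma> > 0" and "-1 < \<rho>" and "\<rho> < 1"
    and "s0 > 0" and "lam > 0"
    and \<delta>_def: "\<delta> = \<nu> - \<eta> * \<rho> * (\<mu> - r) / \<sigma>"
    and \<theta>_def: "\<And>\<gamma>. \<theta> \<gamma> = lam * \<gamma> * (1 - \<rho>\<^sup>2)"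
    and w_def: "\<And>\<gamma>. w \<gamma> = lambertW (s0 * \<eta>\<^sup>2 * T * exp ((\<delta> - \<eta>\<^sup>2 / 2) * T) * \<theta> \<gamma>)"
    and d_def: "\<And>\<gamma>. d \<gamma> = lam * exp (- r * T) / (\<theta> \<gamma> * \<eta>\<^sup>2 * T) * (w \<gamma> + (w \<gamma>)\<^sup>2 / 2)"
  shows "d C1_differentiable_on {0<..} \<and>
    (\<forall>x\<in>{0<..}. \<forall>y\<in>{0<..}. x < y \<longrightarrow> d y < d x) \<and>
    (d \<longlongrightarrow> lam * exp (- r * T) * s0 * exp ((\<delta> - \<eta>\<^sup>2 / 2) * T)) (at_right 0) \<and>
    (d \<longlongrightarrow> 0) at_top \<and>
    bounded (d ` {0<..})"
proof -
  define E where "E = exp ((\<delta> - \<eta>\<^sup>2 / 2) * T)"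
  define K where "K = s0 * \<eta>\<^sup>2 * T * E"
  define c where "c = lam * (1 - \<rho>\<^sup>2)"
  define a where "a = K * c"
  define L where "L = lam * exp (- r * T) * s0 * E"
  define \<phi> where "\<phi> = (\<lambda>g. exp (- lambertW (a*g)) * (1 + lambertW (a*g) / 2))"
  have "\<rho>\<^sup>2 < 1" using assms by (simp add: abs_square_less_1)
  then have cpos: "c > 0" unfolding c_def using assms by simp
  have Kpos: "K > 0" unfolding K_def E_def using assms by simp
  have apos: "a > 0" unfolding a_def using cpos Kpos by simp
  have Lpos: "L > 0" unfolding L_def E_def using assms by simp
  have deq: "d g = L * \<phi> g" if g: "g > 0" for g
  proof -
    define u where "u = lambertW (a*g)"
    have ag: "a*g > 0" using apos g by simp
    have u: "u > 0" "u * exp u = a * g" using lambertW_pos[OF ag] u_def by auto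
    have wg: "w g = u" unfolding w_def \<theta>_def u_def a_def K_def c_def E_def
      by (simp add: algebra_simps)
    have "d g = lam * exp (- r * T) / (c * g * \<eta>\<^sup>2 * T) * (u * (1 + u / 2))"
      unfolding d_def wg \<theta>_def c_def by (simp add: algebra_simps power2_eq_square)
    also have "u * (1 + u / 2) = (u * exp u) * exp (-u) * (1 + u / 2)" by (simp add: exp_minus)
    also have "\<dots> = a * g * exp (-u) * (1 + u / 2)" using u by simp
    also have "lam * exp (- r * T) / (c * g * \<eta>\<^sup>2 * T) * (a * g * exp (-u) * (1 + u / 2))
        = L * (exp (-u) * (1 + u / 2))"
      unfolding a_def K_def L_def using g cpos assms by (simp add: field_simps power2_eq_square)
    finally show ?thesis unfolding \<phi>_def u_def by simp
  qed
  define D where "D = (\<lambda>g. L * (-(a/2) * exp (-2 * lambertW (a*g))))"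
  have dder: "(d has_real_derivative D g) (at g)" if "g > 0" for g
  proof -
    have "((\<lambda>g. L * \<phi> g) has_real_derivative D g) (at g)"
      unfolding D_def \<phi>_def by (intro DERIV_cmult phi_deriv apos that)
    then show ?thesis
      by (rule has_field_derivative_transform_within_open[where S = "{0<..}"]) (use that deq in auto)
  qed
  have C1: "d C1_differentiable_on {0<..}"
    unfolding C1_differentiable_on_def
  proof (intro exI conjI ballI)
    show "(d has_vector_derivative D x) (at x)" if "x \<in> {0<..}" for x
      using dder[of x] that by (simp add: has_real_derivative_iff_has_vector_derivative)
    show "continuous_on {0<..} D" unfolding D_def
      by (intro continuous_intros continuous_on_compose2[OF continuous_on_exp lambertW_comp_cont[OF apos], where t = UNIV]) auto
  qed
  have mono: "\<forall>x\<in>{0<..}. \<forall>y\<in>{0<..}. x < y \<longrightarrow> d y < d x"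
  proof (intro ballI impI)
    fix x y :: real assume "x \<in> {0<..}" "y \<in> {0<..}" "x < y"
    then have xp: "x > 0" by simp
    show "d y < d x"
    proof (rule DERIV_neg_imp_decreasing[where f = d])
      fix z assume z: "x \<le> z" "z \<le> y"
      with xp have zp: "z > 0" by simp
      have "D z < 0" unfolding D_def using Lpos apos by (rule_tac mult_pos_neg) (auto simp: mult_less_0_iff)
      then show "\<exists>y. DERIV d z :> y \<and> y < 0" using dder[OF zp] by blast
    qed fact
  qed
  have lim0: "(d \<longlongrightarrow> L) (at_right 0)"
  proof -
    have W0: "((\<lambda>g. lambertW (a*g)) \<longlongrightarrow> 0) (at_right 0)"
    proof (rule tendsto_sandwich[where f = "\<lambda>_. 0" and h = "\<lambda>g. a * g"])
      show "\<forall>\<^sub>F g in at_right 0. 0 \<le> lambertW (a * g)"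
        using apos
        by (auto intro!: eventually_at_rightI[where b = 1] less_imp_le lambertW_pos[THEN conjunct1])
      show "\<forall>\<^sub>F g in at_right 0. lambertW (a * g) \<le> a * g"
        using apos by (auto intro!: eventually_at_rightI[where b = 1] lambertW_le)
      show "((\<lambda>g. a * g) \<longlongrightarrow> 0) (at_right 0)"
        by (auto intro!: tendsto_eq_intros)
    qed auto
    have "((\<lambda>g. L * \<phi> g) \<longlongrightarrow> L * (exp (- 0) * (1 + 0 / 2))) (at_right 0)"
      unfolding \<phi>_def by (intro tendsto_intros W0) auto
    then have "((\<lambda>g. L * \<phi> g) \<longlongrightarrow> L) (at_right 0)" by simp
    then show ?thesis
      by (rule Lim_transform_eventually) (auto intro!: eventually_at_rightI[where b = 1] simp: deq)
  qed
  have limtop: "(d \<longlongrightarrow> 0) at_top"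
  proof -
    have lnlim: "filterlim (\<lambda>g. ln (a*g) / 2) at_top at_top" using apos by real_asymp
    have Wtop: "filterlim (\<lambda>g. lambertW (a*g)) at_top at_top"
      by (rule filterlim_at_top_mono[OF lnlim])
         (use apos in \<open>auto intro!: eventually_gt_at_top[of 0, THEN eventually_mono] lambertW_ge[unfolded divide_le_eq, simplified]\<close>)
    have h: "((\<lambda>v. exp (- v) * (1 + v / 2)) \<longlongrightarrow> (0::real)) at_top" by real_asymp
    have "((\<lambda>g. L * \<phi> g) \<longlongrightarrow> L * 0) at_top"
      unfolding \<phi>_def by (intro tendsto_mult_left filterlim_compose[OF h Wtop])
    then show ?thesis
      by (subst tendsto_cong[where g = "\<lambda>g. L * \<phi> g"])
         (auto intro!: eventually_gt_at_top[of 0, THEN eventually_mono] deq)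
  qed
  have bnd: "bounded (d ` {0<..})"
    unfolding bounded_iff
  proof (intro exI ballI)
    fix z assume "z \<in> d ` {0<..}"
    then obtain g where g: "g > 0" "z = d g" by auto
    define u where "u = lambertW (a*g)"
    have u: "u > 0" using lambertW_pos[of "a*g"] apos g u_def by simp
    have "1 + u / 2 \<le> exp u" using exp_ge_add_one_self[of u] u by linarith
    then have "exp (-u) * (1 + u/2) \<le> 1" by (simp add: exp_minus field_simps)
    moreover have "exp (-u) * (1 + u/2) \<ge> 0" using u by simp
    ultimately have "\<phi> g \<le> 1" "\<phi> g \<ge> 0" unfolding \<phi>_def u_def by auto
    moreover have "z = L * \<phi> g" using g deq[of g] by simp
    ultimately show "norm z \<le> L" using Lpos
      by (simp add: abs_mult mult_le_cancel_left1)
  qed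
  show ?thesis using C1 mono lim0 limtop bnd unfolding L_def E_def by simp
qed

end
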